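(* Let $f$ be holomorphic on the open unit disc $D_O(1)=\{z=y_1+iy_2\in\mathbb C:|z|<1\}$ with $\int_{D_O(1)}|f(z)|^2\,dy_1\,dy_2<\infty$. Then $$\int_{D_O(1)}(1-|z|)^2|f'(z)|^2\,dy_1\,dy_2\le\frac12\int_{D_O(1)}|f(z)|^2\,dy_1\,dy_2.$$ *)

theory Defs
  imports "HOL-Analysis.Analysis"
begin

end

theory Submission
  imports Defs "HOL-Complex_Analysis.Complex_Analysis"
begin


lemma shear1: "distr lborel borel (\<lambda>p::real\<times>real. (fst p + a * snd p, snd p)) = (lborel :: (real \<times> real) measure)"
proof (rule measure_eqI)
  show "sets (distr lborel borel (\<lambda>p::real\<times>real. (fst p + a * snd p, snd p))) = sets (lborel :: (real \<times> real) measure)" by simp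
next
  fix A :: "(real\<times>real) set" assume "A \<in> sets (distr lborel borel (\<lambda>p::real\<times>real. (fst p + a * snd p, snd p)))"
  then have A[measurable]: "A \<in> sets borel" by simp
  have mS[measurable]: "(\<lambda>p::real\<times>real. (fst p + a * snd p, snd p)) \<in> borel_measurable borel"
    by (intro borel_measurable_continuous_onI continuous_intros)
  have "emeasure (distr lborel borel (\<lambda>p::real\<times>real. (fst p + a * snd p, snd p))) A
     = (\<integral>\<^sup>+ p. indicator A ((\<lambda>p::real\<times>real. (fst p + a * snd p, snd p)) p) \<partial>(lborel::(real\<times>real) measure))"
    apply (subst emeasure_distr, simp, simp)
    apply (subst nn_integral_indicator[symmetric])
     apply (simp add: measurable_sets_borel[OF mS A])
    by (auto intro!: nn_integral_cong split: split_indicator)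
  also have "\<dots> = (\<integral>\<^sup>+ p. indicator A ((\<lambda>p::real\<times>real. (fst p + a * snd p, snd p)) p) \<partial>(lborel \<Otimes>\<^sub>M lborel))"
    by (simp add: lborel_prod)
  also have "\<dots> = (\<integral>\<^sup>+ y. (\<integral>\<^sup>+ x. indicator A (x + a*y, y) \<partial>lborel) \<partial>lborel)"
    by (subst lborel_pair.nn_integral_snd[symmetric]) (auto simp: lborel_prod)
  also have "\<dots> = (\<integral>\<^sup>+ y. (\<integral>\<^sup>+ x. indicator A (x, y) \<partial>lborel) \<partial>lborel)"
  proof (rule nn_integral_cong)
    fix y :: real
    show "(\<integral>\<^sup>+ x. indicator A (x + a*y, y) \<partial>lborel) = (\<integral>\<^sup>+ x. indicator A (x, y) \<partial>lborel)"
      using nn_integral_real_affine[of "\<lambda>x. indicator A (x, y)" 1 "a*y"]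
      by (simp add: add.commute)
  qed
  also have "\<dots> = (\<integral>\<^sup>+ p. indicator A p \<partial>(lborel \<Otimes>\<^sub>M lborel))"
    by (subst lborel_pair.nn_integral_snd[symmetric]) (auto simp: lborel_prod)
  also have "\<dots> = emeasure lborel A"
    by (simp add: lborel_prod)
  finally show "emeasure (distr lborel borel (\<lambda>p::real\<times>real. (fst p + a * snd p, snd p))) A = emeasure lborel A" .
qed

lemma shear2: "distr lborel borel (\<lambda>p::real\<times>real. (fst p, snd p + a * fst p)) = (lborel :: (real \<times> real) measure)"
proof (rule measure_eqI)
  show "sets (distr lborel borel (\<lambda>p::real\<times>real. (fst p, snd p + a * fst p))) = sets (lborel :: (real \<times> real) measure)" by simp
next
  fix A :: "(real\<times>real) set" assume "A \<in> sets (distr lborel borel (\<lambda>p::real\<times>real. (fst p, snd p + a * fst p)))"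
  then have A[measurable]: "A \<in> sets borel" by simp
  have mS[measurable]: "(\<lambda>p::real\<times>real. (fst p, snd p + a * fst p)) \<in> borel_measurable borel"
    by (intro borel_measurable_continuous_onI continuous_intros)
  have "emeasure (distr lborel borel (\<lambda>p::real\<times>real. (fst p, snd p + a * fst p))) A
     = (\<integral>\<^sup>+ p. indicator A ((\<lambda>p::real\<times>real. (fst p, snd p + a * fst p)) p) \<partial>(lborel::(real\<times>real) measure))"
    apply (subst emeasure_distr, simp, simp)
    apply (subst nn_integral_indicator[symmetric])
     apply (simp add: measurable_sets_borel[OF mS A])
    by (auto intro!: nn_integral_cong split: split_indicator)
  also have "\<dots> = (\<integral>\<^sup>+ p. indicator A ((\<lambda>p::real\<times>real. (fst p, snd p + a * fst p)) p) \<partial>(lborel \<Otimes>\<^sub>M lborel))"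
    by (simp add: lborel_prod)
  also have "\<dots> = (\<integral>\<^sup>+ x. (\<integral>\<^sup>+ y. indicator A (x, y + a*x) \<partial>lborel) \<partial>lborel)"
    by (subst lborel.nn_integral_fst[symmetric]) (auto simp: lborel_prod)
  also have "\<dots> = (\<integral>\<^sup>+ x. (\<integral>\<^sup>+ y. indicator A (x, y) \<partial>lborel) \<partial>lborel)"
  proof (rule nn_integral_cong)
    fix x :: real
    show "(\<integral>\<^sup>+ y. indicator A (x, y + a*x) \<partial>lborel) = (\<integral>\<^sup>+ y. indicator A (x, y) \<partial>lborel)"
      using nn_integral_real_affine[of "\<lambda>y. indicator A (x, y)" 1 "a*x"]
      by (simp add: add.commute)
  qed
  also have "\<dots> = (\<integral>\<^sup>+ p. indicator A p \<partial>(lborel \<Otimes>\<^sub>M lborel))"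
    by (subst lborel.nn_integral_fst[symmetric]) (auto simp: lborel_prod)
  also have "\<dots> = emeasure lborel A"
    by (simp add: lborel_prod)
  finally show "emeasure (distr lborel borel (\<lambda>p::real\<times>real. (fst p, snd p + a * fst p))) A = emeasure lborel A" .
qed



lemma measurable_Complex_pair[measurable]:
  "(\<lambda>p::real\<times>real. Complex (fst p) (snd p)) \<in> borel_measurable borel"
  by (auto simp: borel_measurable_complex_iff intro!: borel_measurable_continuous_onI continuous_intros)

lemma lborel_complex:
  "(lborel :: complex measure) = distr (lborel :: (real\<times>real) measure) borel (\<lambda>p. Complex (fst p) (snd p))"
proof (rule lborel_eqI)
  fix l u :: complex
  assume le: "\<And>b. b \<in> Basis \<Longrightarrow> l \<bullet> b \<le> u \<bullet> b"
  then have le1: "Re l \<le> Re u" and le2: "Im l \<le> Im u"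
    using le[of 1] le[of \<i>] by (auto simp: Basis_complex_def inner_complex_def)
  have pre: "(\<lambda>p::real\<times>real. Complex (fst p) (snd p)) -` box l u = box (Re l, Im l) (Re u, Im u)"
    by (auto simp: box_def Basis_complex_def Basis_prod_def inner_complex_def inner_prod_def)
  have "emeasure (distr (lborel :: (real\<times>real) measure) borel (\<lambda>p. Complex (fst p) (snd p))) (box l u)
      = emeasure lborel (box (Re l, Im l) (Re u, Im u) :: (real\<times>real) set)"
    by (subst emeasure_distr) (auto simp: pre)
  also have "\<dots> = ennreal ((Re u - Re l) * (Im u - Im l))"
    using le1 le2 by (subst emeasure_lborel_box_eq) (auto simp: Basis_prod_def box_eq_empty inner_prod_def)
  also have "\<dots> = (\<Prod>b\<in>Basis. (u - l) \<bullet> b)"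
    by (simp add: Basis_complex_def inner_complex_def)
  finally show "emeasure (distr (lborel :: (real\<times>real) measure) borel (\<lambda>p. Complex (fst p) (snd p))) (box l u) = (\<Prod>b\<in>Basis. (u - l) \<bullet> b)" .
qed simp

lemma rotation_invariant:
  fixes c s :: real
  assumes cs: "c\<^sup>2 + s\<^sup>2 = 1" and c: "c \<noteq> -1"
  shows "distr lborel borel (\<lambda>z. Complex c s * z) = (lborel :: complex measure)"
proof -
  define t where "t = s / (1 + c)"
  have c1: "1 + c \<noteq> 0" using c by linarith
  have ts: "t * s = 1 - c" using cs c1 unfolding t_def
    by (simp add: field_simps power2_eq_square)
  define S1 where "S1 = (\<lambda>p::real\<times>real. (fst p + (-t) * snd p, snd p))"
  define T where "T = (\<lambda>p::real\<times>real. (fst p, snd p + s * fst p))"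
  define \<rho> where "\<rho> = (\<lambda>p::real\<times>real. (c * fst p - s * snd p, s * fst p + c * snd p))"
  define C where "C = (\<lambda>p::real\<times>real. Complex (fst p) (snd p))"
  have [measurable]: "S1 \<in> borel_measurable borel" "T \<in> borel_measurable borel" "\<rho> \<in> borel_measurable borel"
     "C \<in> borel_measurable borel"
    unfolding S1_def T_def \<rho>_def C_def
    by (auto intro!: borel_measurable_continuous_onI continuous_intros)
  have rho_eq: "\<rho> = S1 \<circ> T \<circ> S1"
  proof
    fix p :: "real\<times>real"
    have e1: "1 - t * s = c" using ts by simp
    have e2: "t * (2 - s * t) = s"
    proof -
      have z: "1 - c - s * t = 0" using ts by (simp add: algebra_simps)
      have "t * (2 - s * t) = t * (1 + c) + t * (1 - c - s * t)" by (simp add: algebra_simps)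
      also have "\<dots> = t * (1 + c)" using z by simp
      finally have "t * (2 - s * t) = t * (1 + c)" .
      also have "\<dots> = s" using c1 unfolding t_def by simp
      finally show ?thesis .
    qed
    show "\<rho> p = (S1 \<circ> T \<circ> S1) p"
    proof -
      have h3: "c * t + s * (t * t) = t"
      proof -
        have "c * t + s * (t * t) = t * (c + s * t)" by (simp add: algebra_simps)
        also have "c + s * t = 1" using ts by (simp add: algebra_simps)
        finally show ?thesis by simp
      qed
      have cst: "c + s * t = 1" using ts by (simp add: algebra_simps)
      have A: "c * x + s * (t * x) = x" for x :: real
      proof -
        have "c * x + s * (t * x) = (c + s * t) * x" by (simp add: algebra_simps)
        thus ?thesis using cst by simp
      qed
      have B: "t * (y * 2) = s * y + s * (t * (t * y))" for y :: real
      proof -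
        have "t * (y * 2) = (t * (2 - s * t)) * y + s * (t * (t * y))" by (simp add: algebra_simps)
        thus ?thesis using e2 by simp
      qed
      show ?thesis unfolding \<rho>_def S1_def T_def
        using A[of "fst p"] A[of "snd p"] B[of "snd p"] by (simp add: algebra_simps)
    qed
  qed
  have dS1: "distr lborel borel S1 = lborel" unfolding S1_def by (rule shear1)
  have dT: "distr lborel borel T = lborel" unfolding T_def by (rule shear2)
  have drho: "distr lborel borel \<rho> = lborel"
  proof -
    have "distr lborel borel \<rho> = distr (distr (distr lborel borel S1) borel T) borel S1"
      by (simp add: distr_distr rho_eq comp_assoc)
    also have "\<dots> = lborel" by (simp add: dS1 dT)
    finally show ?thesis .
  qed
  have comp: "(\<lambda>z. Complex c s * z) \<circ> C = C \<circ> \<rho>"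
    by (auto simp: C_def \<rho>_def complex_eq_iff)
  have "distr lborel borel (\<lambda>z. Complex c s * z) = distr (distr lborel borel C) borel (\<lambda>z. Complex c s * z)"
    by (simp add: lborel_complex C_def)
  also have "\<dots> = distr lborel borel ((\<lambda>z. Complex c s * z) \<circ> C)"
    by (subst distr_distr) auto
  also have "\<dots> = distr (distr lborel borel \<rho>) borel C"
    by (subst distr_distr) (auto simp: comp)
  also have "\<dots> = lborel" by (simp add: drho lborel_complex C_def)
  finally show ?thesis .
qed



lemma rotation_integral:
  fixes c s :: real and F :: "complex \<Rightarrow> complex"
  assumes cs: "c\<^sup>2 + s\<^sup>2 = 1" and c: "c \<noteq> -1" and [measurable]: "F \<in> borel_measurable borel"
  shows "(\<integral> z. F (Complex c s * z) \<partial>lborel) = (\<integral> z. F z \<partial>lborel)"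
proof -
  have "(\<integral> z. F z \<partial>lborel) = (\<integral> z. F z \<partial>(distr lborel borel (\<lambda>z. Complex c s * z)))"
    by (simp add: rotation_invariant[OF cs c])
  also have "\<dots> = (\<integral> z. F (Complex c s * z) \<partial>lborel)"
    by (subst integral_distr) auto
  finally show ?thesis ..
qed

lemma orthogonality:
  fixes w :: "real \<Rightarrow> real" and r :: real and n m :: nat
  assumes [measurable]: "w \<in> borel_measurable borel" and nm: "n \<noteq> m"
  shows "(\<integral> z. complex_of_real (indicator (ball 0 r) z * w (cmod z)) * z ^ n * cnj z ^ m \<partial>lborel) = 0"
proof -
  define F where "F = (\<lambda>z::complex. complex_of_real (indicator (ball 0 r) z * w (cmod z)) * z ^ n * cnj z ^ m)"
  have m1[measurable]: "(\<lambda>z::complex. z ^ n) \<in> borel_measurable borel"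
    by (intro borel_measurable_continuous_onI continuous_intros)
  have m2[measurable]: "(\<lambda>z::complex. cnj z ^ m) \<in> borel_measurable borel"
    by (intro borel_measurable_continuous_onI continuous_intros)
  have m3[measurable]: "(\<lambda>z::complex. w (cmod z)) \<in> borel_measurable borel"
    using measurable_compose[OF borel_measurable_norm assms(1)] by (simp add: o_def)
  have m4[measurable]: "(\<lambda>z::complex. indicator (ball 0 r) z :: real) \<in> borel_measurable borel"
    by (rule borel_measurable_indicator) simp
  have [measurable]: "F \<in> borel_measurable borel" unfolding F_def by measurable
  define \<theta> where "\<theta> = pi / real (n + m + 1)"
  have npos: "n + m \<ge> 1" using nm by auto
  have th0: "0 < \<theta>" unfolding \<theta>_def by simp
  have two: "2 \<le> real (n + m + 1)" using npos by simp
  have th1: "\<theta> \<le> pi / 2"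
    unfolding \<theta>_def using two by (intro divide_left_mono) auto
  define \<omega> where "\<omega> = Complex (cos \<theta>) (sin \<theta>)"
  have om: "\<omega> = cis \<theta>" by (simp add: \<omega>_def complex_eq_iff)
  have cs: "(cos \<theta>)\<^sup>2 + (sin \<theta>)\<^sup>2 = 1" by simp
  have cnot: "cos \<theta> \<noteq> -1"
  proof -
    have "cos \<theta> \<ge> 0" using th0 th1 by (intro cos_ge_zero) auto
    thus ?thesis by linarith
  qed
  have normom: "cmod \<omega> = 1" by (simp add: om)
  define lam where "lam = \<omega> ^ n * cnj \<omega> ^ m"
  have Frot: "F (\<omega> * z) = lam * F z" for z
  proof -
    have "indicator (ball 0 r) (\<omega> * z) = (indicator (ball 0 r) z :: real)"
      by (simp add: indicator_def norm_mult normom)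
    moreover have "cmod (\<omega> * z) = cmod z" by (simp add: norm_mult normom)
    ultimately show ?thesis unfolding F_def lam_def by (simp add: power_mult_distrib)
  qed
  have lam: "lam = cis ((real n - real m) * \<theta>)"
  proof -
    have "lam = cis (real n * \<theta>) * cis (real m * (- \<theta>))"
      unfolding lam_def om cis_cnj using Complex.DeMoivre[of \<theta> n] Complex.DeMoivre[of "-\<theta>" m] by simp
    also have "\<dots> = cis (real n * \<theta> + real m * (- \<theta>))" by (rule cis_mult)
    finally show ?thesis by (simp add: left_diff_distrib)
  qed
  have lam1: "lam \<noteq> 1"
  proof
    assume "lam = 1"
    then have "sin ((real n - real m) * \<theta>) = 0" using lam by (metis complex.sel(2) one_complex.sel(2) cis.sel(2))
    moreover have "sin ((real n - real m) * \<theta>) \<noteq> 0"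
    proof (cases "n < m")
      case True
      have "0 < (real m - real n) * \<theta>" using True th0 by simp
      moreover have "(real m - real n) * \<theta> < pi"
      proof -
        have "(real m - real n) * \<theta> = pi * ((real m - real n) / real (n + m + 1))"
          unfolding \<theta>_def by simp
        also have "\<dots> < pi * 1" by (intro mult_strict_left_mono) (auto simp: field_simps)
        finally show ?thesis by simp
      qed
      ultimately have "sin ((real m - real n) * \<theta>) > 0" by (rule sin_gt_zero)
      moreover have "(real n - real m) * \<theta> = - ((real m - real n) * \<theta>)" by (simp add: algebra_simps)
      ultimately show ?thesis by (metis less_irrefl neg_0_equal_iff_equal sin_minus)
    next
      case False
      then have "m < n" using nm by auto
      have "0 < (real n - real m) * \<theta>" using \<open>m < n\<close> th0 by simp
      moreover have "(real n - real m) * \<theta> < pi"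
      proof -
        have "(real n - real m) * \<theta> = pi * ((real n - real m) / real (n + m + 1))"
          unfolding \<theta>_def by simp
        also have "\<dots> < pi * 1" by (intro mult_strict_left_mono) (auto simp: field_simps)
        finally show ?thesis by simp
      qed
      ultimately have "sin ((real n - real m) * \<theta>) > 0" by (rule sin_gt_zero)
      thus ?thesis by simp
    qed
    ultimately show False by simp
  qed
  have "(\<integral> z. F z \<partial>lborel) = (\<integral> z. F (\<omega> * z) \<partial>lborel)"
    unfolding \<omega>_def by (rule rotation_integral[OF cs cnot, symmetric]) simp
  also have "\<dots> = lam * (\<integral> z. F z \<partial>lborel)"
    by (simp add: Frot)
  finally have "(1 - lam) * (\<integral> z. F z \<partial>lborel) = 0" by (simp add: algebra_simps)
  with lam1 show ?thesis unfolding F_def by simp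
qed



lemma subdisc_identity:
  fixes g :: "complex \<Rightarrow> complex" and b :: "nat \<Rightarrow> complex" and w :: "real \<Rightarrow> real" and r :: real
  assumes wm[measurable]: "w \<in> borel_measurable borel"
    and w01: "\<And>t. 0 \<le> t \<Longrightarrow> t \<le> 1 \<Longrightarrow> 0 \<le> w t \<and> w t \<le> 1"
    and r: "0 < r" "r < 1"
    and gs: "\<And>z. z \<in> ball 0 1 \<Longrightarrow> (\<lambda>n. b n * z ^ n) sums g z"
  shows "(\<integral>\<^sup>+ z. ennreal (w (cmod z) * (cmod (g z))\<^sup>2) * indicator (ball 0 r) z \<partial>lborel)
       = (\<Sum>n. ennreal ((cmod (b n))\<^sup>2) * (\<integral>\<^sup>+ z. ennreal (w (cmod z) * cmod z ^ (2*n)) * indicator (ball 0 r) z \<partial>lborel))"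
proof -
  define ind where "ind = (\<lambda>z::complex. indicator (ball 0 r) z :: real)"
  define S where "S = (\<lambda>N z. \<Sum>k<N. b k * z ^ k)"
  define \<Phi> where "\<Phi> = (\<lambda>N z. ind z * w (cmod z) * (cmod (S N z))\<^sup>2)"
  define \<Psi> where "\<Psi> = (\<lambda>z. ind z * w (cmod z) * (cmod (g z))\<^sup>2)"
  define c where "c = (\<lambda>n. \<integral> z. ind z * w (cmod z) * cmod z ^ (2*n) \<partial>lborel)"
  have ind_m[measurable]: "ind \<in> borel_measurable borel"
    unfolding ind_def by (rule borel_measurable_indicator) simp
  have wc_m[measurable]: "(\<lambda>z::complex. w (cmod z)) \<in> borel_measurable borel"
    using measurable_compose[OF borel_measurable_norm wm] by (simp add: o_def)
  have S_m[measurable]: "S N \<in> borel_measurable borel" for N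
    unfolding S_def by (intro borel_measurable_continuous_onI continuous_intros)
  have pow_m[measurable]: "(\<lambda>z::complex. z ^ n) \<in> borel_measurable borel" for n
    by (intro borel_measurable_continuous_onI continuous_intros)
  have cpow_m[measurable]: "(\<lambda>z::complex. cnj z ^ n) \<in> borel_measurable borel" for n
    by (intro borel_measurable_continuous_onI continuous_intros)
  have Phi_m[measurable]: "\<Phi> N \<in> borel_measurable borel" for N
    unfolding \<Phi>_def by measurable
  have fin: "emeasure lborel (ball (0::complex) r) < \<infinity>"
    by (simp add: emeasure_ball r less_imp_le)
  have ind_int: "integrable lborel ind"
    unfolding ind_def using fin by (intro integrable_real_indicator) auto
  have ind_nz: "ind z \<noteq> 0 \<Longrightarrow> cmod z < r" for z
    unfolding ind_def by (auto simp: indicator_def)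
  have ind01: "ind z = 0 \<or> ind z = 1" for z unfolding ind_def by (auto simp: indicator_def)
  have wz: "ind z \<noteq> 0 \<Longrightarrow> 0 \<le> w (cmod z) \<and> w (cmod z) \<le> 1" for z
    using ind_nz[of z] r w01[of "cmod z"] by auto
  define M where "M = (\<Sum>n. cmod (b n) * r ^ n)"
  have summ: "summable (\<lambda>n. cmod (b n) * r ^ n)"
  proof -
    define r' where "r' = (1 + r) / 2"
    have r'1: "0 < r'" "r' < 1" "r < r'" using r unfolding r'_def by auto
    have "complex_of_real r' \<in> ball 0 1" using r'1 by auto
    then have "summable (\<lambda>n. b n * complex_of_real r' ^ n)" using gs sums_summable by blast
    moreover have "norm (complex_of_real r) < norm (complex_of_real r')" using r r'1 by auto
    ultimately have "summable (\<lambda>n. norm (b n * complex_of_real r ^ n))" by (rule powser_insidea)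
    moreover have "norm (b n * complex_of_real r ^ n) = cmod (b n) * r ^ n" for n
      using r by (simp add: norm_mult norm_power)
    ultimately show ?thesis by simp
  qed
  have Sbound: "cmod (S N z) \<le> M" if "cmod z < r" for N z
  proof -
    have "cmod (S N z) \<le> (\<Sum>k<N. cmod (b k * z ^ k))" unfolding S_def by (rule norm_sum)
    also have "\<dots> \<le> (\<Sum>k<N. cmod (b k) * r ^ k)"
      using that by (intro sum_mono) (auto simp: norm_mult norm_power intro!: mult_left_mono power_mono)
    also have "\<dots> \<le> M" unfolding M_def using summ r by (intro sum_le_suminf) auto
    finally show ?thesis .
  qed
  have M0: "0 \<le> M" using Sbound[of 0 0] r by (simp add: S_def)
  have Phi_bound: "norm (\<Phi> N z) \<le> ind z * M\<^sup>2" for N z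
  proof (cases "ind z = 0")
    case True then show ?thesis unfolding \<Phi>_def by simp
  next
    case False
    then have i1: "ind z = 1" using ind01 by blast
    have "norm (\<Phi> N z) = w (cmod z) * (cmod (S N z))\<^sup>2" unfolding \<Phi>_def using i1 wz[OF False] by simp
    also have "\<dots> \<le> 1 * M\<^sup>2"
      using wz[OF False] Sbound[OF ind_nz[OF False]] by (intro mult_mono power_mono) auto
    finally show ?thesis using i1 by simp
  qed
  have Phi_lim: "(\<lambda>N. \<Phi> N z) \<longlonglongrightarrow> \<Psi> z" for z
  proof (cases "ind z = 0")
    case True then show ?thesis unfolding \<Phi>_def \<Psi>_def by simp
  next
    case False
    then have "z \<in> ball 0 1" using ind_nz[of z] r by auto
    then have "(\<lambda>N. S N z) \<longlonglongrightarrow> g z" using gs unfolding S_def sums_def by blast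
    then show ?thesis unfolding \<Phi>_def \<Psi>_def by (intro tendsto_intros)
  qed
  have Psi_m[measurable]: "\<Psi> \<in> borel_measurable borel"
    by (rule borel_measurable_LIMSEQ_real[OF Phi_lim Phi_m])
  have bnd_int: "integrable lborel (\<lambda>z. ind z * M\<^sup>2)"
    using ind_int by simp
  have Psi_int: "integrable lborel \<Psi>"
    and Phi_conv: "(\<lambda>N. integral\<^sup>L lborel (\<Phi> N)) \<longlonglongrightarrow> integral\<^sup>L lborel \<Psi>"
  proof -
    have lim_ae: "AE x in lborel. (\<lambda>i. \<Phi> i x) \<longlonglongrightarrow> \<Psi> x" using Phi_lim by simp
    have bnd_ae: "\<And>i. AE x in lborel. norm (\<Phi> i x) \<le> ind x * M\<^sup>2" using Phi_bound by simp
    show "integrable lborel \<Psi>"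
      by (rule integrable_dominated_convergence[of \<Psi> lborel \<Phi> "\<lambda>z. ind z * M\<^sup>2"])
         (use lim_ae bnd_ae bnd_int ind_int in auto)
    show "(\<lambda>N. integral\<^sup>L lborel (\<Phi> N)) \<longlonglongrightarrow> integral\<^sup>L lborel \<Psi>"
      by (rule integral_dominated_convergence[of \<Psi> lborel \<Phi> "\<lambda>z. ind z * M\<^sup>2"])
         (use lim_ae bnd_ae bnd_int ind_int in auto)
  qed
  define K where "K = (\<lambda>n m. \<integral> z. complex_of_real (ind z * w (cmod z)) * z ^ n * cnj z ^ m \<partial>lborel)"
  have K_int: "integrable lborel (\<lambda>z. complex_of_real (ind z * w (cmod z)) * z ^ n * cnj z ^ m)" for n m
  proof (rule integrableI_bounded_set[where A="ball 0 r" and B=1])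
    show "AE x in lborel. x \<in> ball 0 r \<longrightarrow> norm (complex_of_real (ind x * w (cmod x)) * x ^ n * cnj x ^ m) \<le> 1"
    proof (intro AE_I2 impI)
      fix x :: complex assume x: "x \<in> ball 0 r"
      then have i1: "ind x = 1" unfolding ind_def by simp
      have wx: "0 \<le> w (cmod x) \<and> w (cmod x) \<le> 1" using wz[of x] i1 by simp
      have cx: "cmod x \<le> 1" using x r by auto
      have "norm (complex_of_real (ind x * w (cmod x)) * x ^ n * cnj x ^ m) = w (cmod x) * (cmod x ^ n * cmod x ^ m)"
        using i1 wx by (simp add: norm_mult norm_power)
      also have "\<dots> \<le> 1 * (1 * 1)"
        using wx cx by (intro mult_mono power_le_one) (auto intro: power_le_one)
      finally show "norm (complex_of_real (ind x * w (cmod x)) * x ^ n * cnj x ^ m) \<le> 1" by simp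
    qed
    show "AE x in lborel. x \<notin> ball 0 r \<longrightarrow> complex_of_real (ind x * w (cmod x)) * x ^ n * cnj x ^ m = 0"
      unfolding ind_def by auto
  qed (use fin in auto)
  have K_off: "n \<noteq> m \<Longrightarrow> K n m = 0" for n m
    unfolding K_def ind_def by (rule orthogonality[OF wm])
  have K_diag: "K n n = complex_of_real (c n)" for n
  proof -
    have "complex_of_real (ind z * w (cmod z)) * z ^ n * cnj z ^ n
        = complex_of_real (ind z * w (cmod z) * cmod z ^ (2*n))" for z
    proof -
      have "z ^ n * cnj z ^ n = (z * cnj z) ^ n" by (simp add: power_mult_distrib)
      also have "\<dots> = complex_of_real (cmod z ^ (2*n))"
        by (simp flip: complex_norm_square add: power_mult)
      finally show ?thesis by (simp add: mult.assoc)
    qed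
    then have eq: "(\<lambda>z. complex_of_real (ind z * w (cmod z)) * z ^ n * cnj z ^ n)
        = (\<lambda>z. complex_of_real (ind z * w (cmod z) * cmod z ^ (2*n)))" by (rule ext)
    show ?thesis unfolding K_def c_def eq by (rule integral_complex_of_real)
  qed
  have Phi_int_eq: "integral\<^sup>L lborel (\<Phi> N) = (\<Sum>n<N. (cmod (b n))\<^sup>2 * c n)" for N
  proof -
    have key: "complex_of_real (\<Phi> N z) = (\<Sum>n<N. \<Sum>m<N. (b n * cnj (b m)) *
                 (complex_of_real (ind z * w (cmod z)) * z ^ n * cnj z ^ m))" for z
    proof -
      have "complex_of_real ((cmod (S N z))\<^sup>2) = S N z * cnj (S N z)" by (rule complex_norm_square)
      also have "\<dots> = (\<Sum>n<N. \<Sum>m<N. (b n * z ^ n) * (cnj (b m) * cnj z ^ m))"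
        unfolding S_def by (simp add: sum_product)
      finally have e: "complex_of_real ((cmod (S N z))\<^sup>2) = (\<Sum>n<N. \<Sum>m<N. (b n * z ^ n) * (cnj (b m) * cnj z ^ m))" .
      have "complex_of_real (\<Phi> N z) = complex_of_real (ind z * w (cmod z)) * complex_of_real ((cmod (S N z))\<^sup>2)"
        unfolding \<Phi>_def by simp
      also have "\<dots> = (\<Sum>n<N. \<Sum>m<N. complex_of_real (ind z * w (cmod z)) * ((b n * z ^ n) * (cnj (b m) * cnj z ^ m)))"
        unfolding e by (simp add: sum_distrib_left)
      also have "\<dots> = (\<Sum>n<N. \<Sum>m<N. (b n * cnj (b m)) *
                 (complex_of_real (ind z * w (cmod z)) * z ^ n * cnj z ^ m))"
        by (intro sum.cong refl) (simp add: mult_ac)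
      finally show ?thesis .
    qed
    have "complex_of_real (integral\<^sup>L lborel (\<Phi> N)) = (\<integral> z. complex_of_real (\<Phi> N z) \<partial>lborel)"
      by simp
    also have "\<dots> = (\<Sum>n<N. \<Sum>m<N. (b n * cnj (b m)) * K n m)"
    proof -
      have int_nm: "integrable lborel (\<lambda>z. (b n * cnj (b m)) * (complex_of_real (ind z * w (cmod z)) * z ^ n * cnj z ^ m))" for n m
        by (intro integrable_mult_right K_int)
      have int_n: "integrable lborel (\<lambda>z. \<Sum>m<N. (b n * cnj (b m)) * (complex_of_real (ind z * w (cmod z)) * z ^ n * cnj z ^ m))" for n
        by (rule Bochner_Integration.integrable_sum) (rule int_nm)
      show ?thesis unfolding key K_def
        by (subst Bochner_Integration.integral_sum[OF int_n], rule sum.cong[OF refl], subst Bochner_Integration.integral_sum[OF int_nm], simp only: integral_mult_right_zero)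
    qed
    also have "\<dots> = (\<Sum>n<N. (b n * cnj (b n)) * K n n)"
    proof (intro sum.cong refl)
      fix n assume "n \<in> {..<N}"
      have "(\<Sum>m<N. (b n * cnj (b m)) * K n m) = (\<Sum>m<N. if m = n then (b n * cnj (b n)) * K n n else 0)"
        by (intro sum.cong refl) (auto simp: K_off)
      also have "\<dots> = (b n * cnj (b n)) * K n n" using \<open>n \<in> {..<N}\<close> by simp
      finally show "(\<Sum>m<N. (b n * cnj (b m)) * K n m) = (b n * cnj (b n)) * K n n" .
    qed
    also have "\<dots> = complex_of_real (\<Sum>n<N. (cmod (b n))\<^sup>2 * c n)"
      by (simp add: K_diag flip: complex_norm_square)
    finally show ?thesis by (simp only: of_real_eq_iff)
  qed
  have nn3: "0 \<le> ind x * w (cmod x) * cmod x ^ k" for x k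
  proof (cases "ind x = 0")
    case False
    then show ?thesis using wz[OF False] ind01[of x] by auto
  qed simp
  have c_nonneg: "0 \<le> c n" for n
    unfolding c_def using nn3 by (intro integral_nonneg_AE AE_I2) auto
  have sums1: "(\<lambda>n. (cmod (b n))\<^sup>2 * c n) sums integral\<^sup>L lborel \<Psi>"
    unfolding sums_def using Phi_conv by (simp add: Phi_int_eq)
  have Psi_nonneg: "0 \<le> \<Psi> z" for z
    unfolding \<Psi>_def using wz[of z] ind01[of z] by auto
  have c_int: "integrable lborel (\<lambda>z. ind z * w (cmod z) * cmod z ^ (2*n))" for n
  proof -
    have "integrable lborel (\<lambda>z. Re (complex_of_real (ind z * w (cmod z)) * z ^ n * cnj z ^ n))"
      using K_int by (rule integrable_Re)
    moreover have "Re (complex_of_real (ind z * w (cmod z)) * z ^ n * cnj z ^ n) = ind z * w (cmod z) * cmod z ^ (2*n)" for z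
    proof -
      have "z ^ n * cnj z ^ n = (z * cnj z) ^ n" by (simp add: power_mult_distrib)
      also have "\<dots> = complex_of_real (cmod z ^ (2*n))"
        by (simp flip: complex_norm_square add: power_mult)
      finally show ?thesis by (simp add: mult.assoc)
    qed
    ultimately show ?thesis by simp
  qed
  have c_nn: "ennreal (c n) = (\<integral>\<^sup>+ z. ennreal (w (cmod z) * cmod z ^ (2*n)) * indicator (ball 0 r) z \<partial>lborel)" for n
  proof -
    have "ennreal (c n) = (\<integral>\<^sup>+ z. ennreal (ind z * w (cmod z) * cmod z ^ (2*n)) \<partial>lborel)"
      unfolding c_def using nn3
      by (subst nn_integral_eq_integral[OF c_int]) (auto intro!: AE_I2)
    also have "\<dots> = (\<integral>\<^sup>+ z. ennreal (w (cmod z) * cmod z ^ (2*n)) * indicator (ball 0 r) z \<partial>lborel)"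
      by (intro nn_integral_cong) (simp add: ind_def indicator_def)
    finally show ?thesis .
  qed
  have "(\<integral>\<^sup>+ z. ennreal (w (cmod z) * (cmod (g z))\<^sup>2) * indicator (ball 0 r) z \<partial>lborel)
      = (\<integral>\<^sup>+ z. ennreal (\<Psi> z) \<partial>lborel)"
    by (intro nn_integral_cong) (simp add: \<Psi>_def ind_def indicator_def)
  also have "\<dots> = ennreal (integral\<^sup>L lborel \<Psi>)"
    using Psi_nonneg by (subst nn_integral_eq_integral[OF Psi_int]) auto
  also have "\<dots> = ennreal (\<Sum>n. (cmod (b n))\<^sup>2 * c n)"
    using sums1 by (simp add: sums_unique[symmetric])
  also have "\<dots> = (\<Sum>n. ennreal ((cmod (b n))\<^sup>2 * c n))"
    using sums1 c_nonneg by (intro suminf_ennreal2[symmetric]) (auto simp: sums_summable)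
  also have "\<dots> = (\<Sum>n. ennreal ((cmod (b n))\<^sup>2) * ennreal (c n))"
    using c_nonneg by (simp add: ennreal_mult)
  also have "\<dots> = (\<Sum>n. ennreal ((cmod (b n))\<^sup>2) * (\<integral>\<^sup>+ z. ennreal (w (cmod z) * cmod z ^ (2*n)) * indicator (ball 0 r) z \<partial>lborel))"
    by (simp add: c_nn)
  finally show ?thesis .
qed



definition rk :: "nat \<Rightarrow> real" where "rk k = 1 - 1 / (real k + 2)"

lemma rk_bounds: "0 < rk k" "rk k < 1"
  unfolding rk_def by (auto simp: field_simps)

lemma rk_mono: "k \<le> l \<Longrightarrow> rk k \<le> rk l"
  unfolding rk_def by (auto simp: field_simps)

lemma rk_exceeds: assumes "x < 1" shows "\<exists>k. x < rk k"
proof -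
  obtain k :: nat where k: "1 / (1 - x) < real k" using reals_Archimedean2 by blast
  have pos: "0 < 1 - x" using assms by simp
  have "1 / (real k + 2) < 1 - x"
  proof -
    have "1 < real k * (1 - x)" using k pos by (simp add: field_simps)
    also have "\<dots> < (real k + 2) * (1 - x)" using pos by (intro mult_strict_right_mono) auto
    finally show ?thesis by (simp add: field_simps)
  qed
  then show ?thesis unfolding rk_def by (intro exI[of _ k]) simp
qed

lemma disc_SUP:
  fixes F :: "complex \<Rightarrow> ennreal"
  assumes Fm[measurable]: "(\<lambda>z. F z * indicator (ball 0 1) z) \<in> borel_measurable borel"
  shows "(\<integral>\<^sup>+ z. F z * indicator (ball 0 1) z \<partial>lborel) = (SUP k. \<integral>\<^sup>+ z. F z * indicator (ball 0 (rk k)) z \<partial>lborel)"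
proof -
  define f where "f = (\<lambda>k z. F z * indicator (ball 0 1) z * indicator (ball (0::complex) (rk k)) z)"
  have f_eq: "f k z = F z * indicator (ball 0 (rk k)) z" for k z
    using rk_bounds[of k] unfolding f_def by (auto simp: indicator_def)
  have [measurable]: "f k \<in> borel_measurable borel" for k
    unfolding f_def by (intro borel_measurable_times_ennreal Fm) (rule borel_measurable_indicator, simp)
  have inc: "incseq f"
  proof (rule incseq_SucI, rule le_funI)
    fix k z
    show "f k z \<le> f (Suc k) z"
      unfolding f_eq using rk_mono[of k "Suc k"]
      by (auto simp: indicator_def intro: mult_left_mono)
  qed
  have sup: "(SUP k. f k z) = F z * indicator (ball 0 1) z" for z
  proof (cases "z \<in> ball 0 1")
    case False
    then show ?thesis unfolding f_def by simp
  next
    case True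
    then obtain K where K: "cmod z < rk K" using rk_exceeds by auto
    show ?thesis
    proof (rule antisym)
      show "(SUP k. f k z) \<le> F z * indicator (ball 0 1) z"
        using True by (intro SUP_least) (auto simp: f_eq indicator_def)
      show "F z * indicator (ball 0 1) z \<le> (SUP k. f k z)"
        using True K by (intro SUP_upper2[of K]) (auto simp: f_eq indicator_def)
    qed
  qed
  have "(\<integral>\<^sup>+ z. F z * indicator (ball 0 1) z \<partial>lborel) = (\<integral>\<^sup>+ z. (SUP k. f k z) \<partial>lborel)"
    by (simp add: sup)
  also have "\<dots> = (SUP k. integral\<^sup>N lborel (f k))"
    by (rule nn_integral_monotone_convergence_SUP[OF inc]) simp
  also have "\<dots> = (SUP k. \<integral>\<^sup>+ z. F z * indicator (ball 0 (rk k)) z \<partial>lborel)"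
  proof -
    have "f k = (\<lambda>z. F z * indicator (ball 0 (rk k)) z)" for k by (rule ext) (rule f_eq)
    then show ?thesis by simp
  qed
  finally show ?thesis .
qed



lemma disc_identity:
  fixes g :: "complex \<Rightarrow> complex" and b :: "nat \<Rightarrow> complex" and w :: "real \<Rightarrow> real"
  assumes wm[measurable]: "w \<in> borel_measurable borel"
    and w01: "\<And>t. 0 \<le> t \<Longrightarrow> t \<le> 1 \<Longrightarrow> 0 \<le> w t \<and> w t \<le> 1"
    and gs: "\<And>z. z \<in> ball 0 1 \<Longrightarrow> (\<lambda>n. b n * z ^ n) sums g z"
    and gc: "continuous_on (ball 0 1) g"
  shows "(\<integral>\<^sup>+ z. ennreal (w (cmod z) * (cmod (g z))\<^sup>2) * indicator (ball 0 1) z \<partial>lborel)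
       = (\<Sum>n. ennreal ((cmod (b n))\<^sup>2) * (\<integral>\<^sup>+ z. ennreal (w (cmod z) * cmod z ^ (2*n)) * indicator (ball 0 1) z \<partial>lborel))"
proof -
  have wc_m[measurable]: "(\<lambda>z::complex. w (cmod z)) \<in> borel_measurable borel"
    using measurable_compose[OF borel_measurable_norm wm] by (simp add: o_def)
  have G[measurable]: "(\<lambda>z. indicator (ball 0 1) z *\<^sub>R g z) \<in> borel_measurable borel"
    by (rule borel_measurable_continuous_on_indicator) (simp_all add: gc)
  have ind1[measurable]: "(\<lambda>z::complex. indicator (ball 0 1) z :: ennreal) \<in> borel_measurable borel"
    by (rule borel_measurable_indicator) simp
  have Fm: "(\<lambda>z. ennreal (w (cmod z) * (cmod (g z))\<^sup>2) * indicator (ball 0 1) z) \<in> borel_measurable borel"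
  proof -
    have "(\<lambda>z. ennreal (w (cmod z) * (cmod (indicator (ball 0 1) z *\<^sub>R g z))\<^sup>2) * indicator (ball 0 1) z) \<in> borel_measurable borel"
      by measurable
    moreover have "(\<lambda>z. ennreal (w (cmod z) * (cmod (indicator (ball 0 1) z *\<^sub>R g z))\<^sup>2) * indicator (ball 0 1) z)
        = (\<lambda>z. ennreal (w (cmod z) * (cmod (g z))\<^sup>2) * indicator (ball 0 1) z)"
      by (rule ext) (simp add: indicator_def)
    ultimately show ?thesis by simp
  qed
  have pm: "(\<lambda>z. ennreal (w (cmod z) * cmod z ^ (2*n)) * indicator (ball 0 1) z) \<in> borel_measurable borel" for n
    by measurable
  define J where "J = (\<lambda>n k. \<integral>\<^sup>+ z. ennreal (w (cmod z) * cmod z ^ (2*n)) * indicator (ball 0 (rk k)) z \<partial>lborel)"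
  have Jinc: "incseq (\<lambda>k. ennreal ((cmod (b n))\<^sup>2) * J n k)" for n
  proof (rule incseq_SucI)
    fix k
    show "ennreal ((cmod (b n))\<^sup>2) * J n k \<le> ennreal ((cmod (b n))\<^sup>2) * J n (Suc k)"
      unfolding J_def using rk_mono[of k "Suc k"]
      by (intro mult_left_mono nn_integral_mono) (auto simp: indicator_def intro: mult_left_mono)
  qed
  have "(\<integral>\<^sup>+ z. ennreal (w (cmod z) * (cmod (g z))\<^sup>2) * indicator (ball 0 1) z \<partial>lborel)
      = (SUP k. \<integral>\<^sup>+ z. ennreal (w (cmod z) * (cmod (g z))\<^sup>2) * indicator (ball 0 (rk k)) z \<partial>lborel)"
    by (rule disc_SUP[OF Fm])
  also have "\<dots> = (SUP k. \<Sum>n. ennreal ((cmod (b n))\<^sup>2) * J n k)"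
    unfolding J_def using rk_bounds
    by (intro SUP_cong refl subdisc_identity[OF wm w01 _ _ gs]) auto
  also have "\<dots> = (\<Sum>n. SUP k. ennreal ((cmod (b n))\<^sup>2) * J n k)"
    by (rule ennreal_suminf_SUP_eq[symmetric]) (rule Jinc)
  also have "\<dots> = (\<Sum>n. ennreal ((cmod (b n))\<^sup>2) * (SUP k. J n k))"
    by (simp add: SUP_mult_left_ennreal)
  also have "\<dots> = (\<Sum>n. ennreal ((cmod (b n))\<^sup>2) * (\<integral>\<^sup>+ z. ennreal (w (cmod z) * cmod z ^ (2*n)) * indicator (ball 0 1) z \<partial>lborel))"
    unfolding J_def by (simp add: disc_SUP[OF pm])
  finally show ?thesis .
qed



lemma cball_area: "0 \<le> r \<Longrightarrow> emeasure lborel (cball (0::complex) r) = ennreal (pi * r^2)"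
  by (simp add: emeasure_cball unit_ball_vol_2)

lemma ball_area: "0 \<le> r \<Longrightarrow> emeasure lborel (ball (0::complex) r) = ennreal (pi * r^2)"
  by (simp add: emeasure_ball unit_ball_vol_2)

lemma FTC_2pit: "0 \<le> a \<Longrightarrow> a \<le> b \<Longrightarrow>
  (\<integral>\<^sup>+t. ennreal (2*pi*t) * indicator {a..b} t \<partial>lborel) = ennreal (pi * b^2 - pi * a^2)"
  by (rule nn_integral_FTC_Icc[where F="\<lambda>t. pi * t^2"])
     (auto intro!: derivative_eq_intros simp: power2_eq_square)

lemma radial:
  fixes G :: "real \<Rightarrow> ennreal" assumes Gm[measurable]: "G \<in> borel_measurable borel"
  shows "(\<integral>\<^sup>+ z. G (cmod z) * indicator (ball 0 1) z \<partial>lborel) = (\<integral>\<^sup>+ t. ennreal (2*pi*t) * indicator {0..1} t * G t \<partial>lborel)"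
proof -
  have indm[measurable]: "(indicator (ball (0::complex) 1) :: complex \<Rightarrow> ennreal) \<in> borel_measurable borel"
    by (rule borel_measurable_indicator) simp
  define M1 where "M1 = distr (density lborel (indicator (ball (0::complex) 1))) borel cmod"
  define M2 where "M2 = density lborel (\<lambda>t::real. ennreal (2*pi*t) * indicator {0..1} t)"
  have E1: "emeasure M1 {x<..} = (if x < 0 then ennreal pi else if x < 1 then ennreal (pi - pi * x^2) else 0)" for x
  proof -
    have "emeasure M1 {x<..} = emeasure lborel (ball 0 1 \<inter> {z::complex. x < cmod z})"
      unfolding M1_def
      by (subst emeasure_distr) (auto simp: emeasure_restricted vimage_def intro!: arg_cong2[where f=emeasure])
    also have "\<dots> = (if x < 0 then ennreal pi else if x < 1 then ennreal (pi - pi * x^2) else 0)"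
    proof (cases "x < 0")
      case True
      then have "ball 0 1 \<inter> {z::complex. x < cmod z} = ball 0 1" by (auto intro: less_le_trans[OF _ norm_ge_zero])
      then show ?thesis using True by (simp add: ball_area)
    next
      case False
      show ?thesis
      proof (cases "x < 1")
        case True
        have "ball 0 1 \<inter> {z::complex. x < cmod z} = ball 0 1 - cball 0 x" by auto
        moreover have "emeasure lborel (ball (0::complex) 1 - cball 0 x) = ennreal pi - ennreal (pi * x^2)"
          using False True by (subst emeasure_Diff) (auto simp: ball_area cball_area)
        moreover have "ennreal pi - ennreal (pi * x^2) = ennreal (pi - pi * x^2)"
          using False by (intro ennreal_minus) auto
        ultimately show ?thesis using False True by simp
      next
        case False2: False
        have "ball 0 1 \<inter> {z::complex. x < cmod z} = {}" using False2 by auto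
        then show ?thesis using False False2 by simp
      qed
    qed
    finally show ?thesis .
  qed
  have E2: "emeasure M2 {x<..} = (if x < 0 then ennreal pi else if x < 1 then ennreal (pi - pi * x^2) else 0)" for x
  proof -
    have "emeasure M2 {x<..} = (\<integral>\<^sup>+t. ennreal (2*pi*t) * indicator {0..1} t * indicator {x<..} t \<partial>lborel)"
      unfolding M2_def by (subst emeasure_density) auto
    also have "\<dots> = (if x < 0 then ennreal pi else if x < 1 then ennreal (pi - pi * x^2) else 0)"
    proof (cases "x < 0")
      case True
      have "(\<integral>\<^sup>+t. ennreal (2*pi*t) * indicator {0..1} t * indicator {x<..} t \<partial>lborel)
          = (\<integral>\<^sup>+t. ennreal (2*pi*t) * indicator {0..1} t \<partial>lborel)"
        using True by (intro nn_integral_cong) (auto simp: indicator_def)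
      also have "\<dots> = ennreal pi" by (subst FTC_2pit) auto
      finally show ?thesis using True by simp
    next
      case False
      show ?thesis
      proof (cases "x < 1")
        case True
        have "(\<integral>\<^sup>+t. ennreal (2*pi*t) * indicator {0..1} t * indicator {x<..} t \<partial>lborel)
          = (\<integral>\<^sup>+t. ennreal (2*pi*t) * indicator {x..1} t \<partial>lborel)"
          using False by (intro nn_integral_cong_AE eventually_mono[OF AE_lborel_singleton[of x]])
                         (auto simp: indicator_def)
        also have "\<dots> = ennreal (pi - pi * x^2)" using False True by (subst FTC_2pit) auto
        finally show ?thesis using False True by simp
      next
        case False2: False
        have z: "(\<lambda>t. ennreal (2*pi*t) * indicator {0..1} t * indicator {x<..} t) = (\<lambda>t. 0)"
          using False2 by (auto simp: indicator_def)
        have "(\<integral>\<^sup>+t. ennreal (2*pi*t) * indicator {0..1} t * indicator {x<..} t \<partial>lborel) = 0"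
          by (simp only: z) simp
        then show ?thesis using False False2 by simp
      qed
    qed
    finally show ?thesis .
  qed
  have eq: "M1 = M2"
  proof (rule measure_eqI_lessThan)
    show "sets M1 = sets borel" unfolding M1_def by simp
    show "sets M2 = sets borel" unfolding M2_def by simp
    show "emeasure M1 {x<..} < \<infinity>" for x by (simp add: E1)
    show "emeasure M1 {x<..} = emeasure M2 {x<..}" for x by (simp add: E1 E2)
  qed
  have "(\<integral>\<^sup>+ z. G (cmod z) * indicator (ball 0 1) z \<partial>lborel)
      = (\<integral>\<^sup>+ z. G (cmod z) \<partial>density lborel (indicator (ball (0::complex) 1)))"
    by (subst nn_integral_density) (auto simp: mult.commute)
  also have "\<dots> = (\<integral>\<^sup>+ t. G t \<partial>M1)"
    unfolding M1_def by (subst nn_integral_distr) auto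
  also have "\<dots> = (\<integral>\<^sup>+ t. G t \<partial>M2)" by (simp add: eq)
  also have "\<dots> = (\<integral>\<^sup>+ t. ennreal (2*pi*t) * indicator {0..1} t * G t \<partial>lborel)"
    unfolding M2_def by (subst nn_integral_density) auto
  finally show ?thesis .
qed



definition Pw :: "nat \<Rightarrow> real \<Rightarrow> real" where "Pw k t = t^(Suc k) / real (Suc k)"

lemma Pw_deriv: "(Pw k has_real_derivative x^k) (at x)"
proof -
  have "((\<lambda>t. t^(Suc k)) has_real_derivative real (Suc k) * x^(Suc k - Suc 0)) (at x)"
    by (rule DERIV_pow)
  then have "((\<lambda>t. t^(Suc k) / real (Suc k)) has_real_derivative real (Suc k) * x^(Suc k - Suc 0) / real (Suc k)) (at x)"
    by (rule DERIV_cdivide)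
  then show ?thesis unfolding Pw_def[abs_def] by simp
qed

lemma Pw_01: "Pw k 0 = 0" "Pw k 1 = 1 / real (Suc k)"
  unfolding Pw_def by simp_all

lemma I_value: "(\<integral>\<^sup>+ z. ennreal (cmod z ^ (2*n)) * indicator (ball 0 1) z \<partial>lborel) = ennreal (pi / (real n + 1))"
proof -
  have "(\<integral>\<^sup>+ z. ennreal (cmod z ^ (2*n)) * indicator (ball 0 1) z \<partial>lborel)
      = (\<integral>\<^sup>+ t. ennreal (2*pi*t) * indicator {0..1} t * ennreal (t ^ (2*n)) \<partial>lborel)"
    by (rule radial[where G="\<lambda>t. ennreal (t ^ (2*n))"]) simp
  also have "\<dots> = (\<integral>\<^sup>+ t. ennreal (2*pi*t^(2*n+1)) * indicator {0..1} t \<partial>lborel)"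
    by (intro nn_integral_cong) (auto simp: indicator_def ennreal_mult[symmetric] mult_ac)
  also have "\<dots> = ennreal (2 * pi * Pw (2*n+1) 1 - 2 * pi * Pw (2*n+1) 0)"
  proof (rule nn_integral_FTC_Icc[where F="\<lambda>t. 2 * pi * Pw (2*n+1) t"])
    fix x :: real assume "x \<in> {0..1}"
    show "((\<lambda>t. 2 * pi * Pw (2*n+1) t) has_real_derivative 2*pi*x^(2*n+1)) (at x)"
      by (rule DERIV_cmult) (rule Pw_deriv)
  qed auto
  also have "\<dots> = ennreal (pi / (real n + 1))" by (simp add: Pw_01 field_simps)
  finally show ?thesis .
qed

definition Jr :: "nat \<Rightarrow> real" where
  "Jr n = 2 * pi * (1 / (2 * real n + 2) - 2 / (2 * real n + 3) + 1 / (2 * real n + 4))"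

lemma J_value: "(\<integral>\<^sup>+ z. ennreal ((1 - cmod z)\<^sup>2 * cmod z ^ (2*n)) * indicator (ball 0 1) z \<partial>lborel) = ennreal (Jr n)"
proof -
  define F where "F = (\<lambda>t::real. 2 * pi * (Pw (2*n+1) t - 2 * Pw (2*n+2) t + Pw (2*n+3) t))"
  have "(\<integral>\<^sup>+ z. ennreal ((1 - cmod z)\<^sup>2 * cmod z ^ (2*n)) * indicator (ball 0 1) z \<partial>lborel)
      = (\<integral>\<^sup>+ t. ennreal (2*pi*t) * indicator {0..1} t * ennreal ((1 - t)\<^sup>2 * t ^ (2*n)) \<partial>lborel)"
    by (rule radial[where G="\<lambda>t. ennreal ((1 - t)\<^sup>2 * t ^ (2*n))"]) simp
  also have "\<dots> = (\<integral>\<^sup>+ t. ennreal (2*pi*(t^(2*n+1) - 2*t^(2*n+2) + t^(2*n+3))) * indicator {0..1} t \<partial>lborel)"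
  proof (intro nn_integral_cong)
    fix t :: real
    have p: "t^(2*n+1) = t * t^(2*n)" "t^(2*n+2) = t * t * t^(2*n)" "t^(2*n+3) = t * t * t * t^(2*n)"
      by (simp_all add: power_add power3_eq_cube power2_eq_square)
    have "2*pi*t * ((1 - t)\<^sup>2 * t ^ (2*n)) = 2*pi*(t^(2*n+1) - 2*t^(2*n+2) + t^(2*n+3))"
      unfolding p by (simp add: power2_eq_square algebra_simps)
    then show "ennreal (2*pi*t) * indicator {0..1} t * ennreal ((1 - t)\<^sup>2 * t ^ (2*n))
        = ennreal (2*pi*(t^(2*n+1) - 2*t^(2*n+2) + t^(2*n+3))) * indicator {0..1} t"
      by (auto simp: indicator_def ennreal_mult[symmetric] mult_ac)
  qed
  also have "\<dots> = ennreal (F 1 - F 0)"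
  proof (rule nn_integral_FTC_Icc[where F=F])
    fix x :: real assume x: "x \<in> {0..1}"
    show "(F has_real_derivative 2*pi*(x^(2*n+1) - 2*x^(2*n+2) + x^(2*n+3))) (at x)"
      unfolding F_def by (intro DERIV_cmult DERIV_add DERIV_diff Pw_deriv)
    have p: "x^(2*n+1) = x * x^(2*n)" "x^(2*n+2) = x * x * x^(2*n)" "x^(2*n+3) = x * x * x * x^(2*n)"
      by (simp_all add: power_add power3_eq_cube power2_eq_square)
    have "2*pi*(x^(2*n+1) - 2*x^(2*n+2) + x^(2*n+3)) = 2*pi*x * ((1 - x)\<^sup>2 * x ^ (2*n))"
      unfolding p by (simp add: power2_eq_square algebra_simps)
    then show "0 \<le> 2*pi*(x^(2*n+1) - 2*x^(2*n+2) + x^(2*n+3))" using x by simp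
  qed auto
  also have "F 1 - F 0 = Jr n" unfolding F_def Jr_def Pw_01 by (simp add: algebra_simps)
  finally show ?thesis .
qed

lemma L1: fixes m::real assumes m: "0 \<le> m"
  shows "2 * pi * (1 / (2 * m + 2) - 2 / (2 * m + 3) + 1 / (2 * m + 4)) = pi / ((m + 1) * (2 * m + 3) * (m + 2))"
proof -
  have d: "2*m+2 > 0" "2*m+3 > 0" "2*m+4 > 0" "m+1 > 0" "m+2 > 0" using m by linarith+
  have "(1 / (2 * m + 2) - 2 / (2 * m + 3) + 1 / (2 * m + 4)) * ((m + 1) * (2 * m + 3) * (m + 2)) = 1/2"
  proof -
    have a: "1 / (2 * m + 2) * ((m + 1) * (2 * m + 3) * (m + 2)) = (2*m+3)*(m+2)/2"
      using d by (simp add: field_simps)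
    have b: "2 / (2 * m + 3) * ((m + 1) * (2 * m + 3) * (m + 2)) = 2*(m+1)*(m+2)"
      using d by (simp add: field_simps)
    have c: "1 / (2 * m + 4) * ((m + 1) * (2 * m + 3) * (m + 2)) = (m+1)*(2*m+3)/2"
      using d by (simp add: field_simps)
    have "(1 / (2 * m + 2) - 2 / (2 * m + 3) + 1 / (2 * m + 4)) * ((m + 1) * (2 * m + 3) * (m + 2))
      = 1 / (2 * m + 2) * ((m + 1) * (2 * m + 3) * (m + 2)) - 2 / (2 * m + 3) * ((m + 1) * (2 * m + 3) * (m + 2))
        + 1 / (2 * m + 4) * ((m + 1) * (2 * m + 3) * (m + 2))"
      by (simp only: distrib_right left_diff_distrib)
    also have "\<dots> = (2*m+3)*(m+2)/2 - 2*(m+1)*(m+2) + (m+1)*(2*m+3)/2" by (simp only: a b c)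
    also have "\<dots> = 1/2" by (simp add: field_simps)
    finally show ?thesis .
  qed
  then have "(1 / (2 * m + 2) - 2 / (2 * m + 3) + 1 / (2 * m + 4)) = (1/2) / ((m + 1) * (2 * m + 3) * (m + 2))"
    using d by (subst eq_divide_eq) simp
  then show ?thesis by simp
qed
lemma Jr_alt: "Jr n = pi / ((real n + 1) * (2 * real n + 3) * (real n + 2))"
  unfolding Jr_def by (rule L1) simp



lemma coef_ineq: fixes m A :: real assumes m: "0 \<le> m" and A: "0 \<le> A"
  shows "(m+1)^2 * A * (pi / ((m+1) * (2*m+3) * (m+2))) \<le> 1/2 * (A * (pi / (m + 2)))"
proof -
  define D where "D = (2*m+3) * (m+2)"
  have Dp: "0 < D" unfolding D_def using m by (intro mult_pos_pos) auto
  have m1: "0 < m + 1" "0 < m + 2" using m by auto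
  have e1: "(m+1)^2 * A * (pi / ((m+1) * (2*m+3) * (m+2))) = A * (pi * (m+1)) / D"
  proof -
    have f: "(m+1) * (2*m+3) * (m+2) = (m+1) * D" unfolding D_def by (simp add: mult.assoc)
    have g: "(m+1)^2 * A * (pi / ((m+1) * D)) = (A * (pi * (m+1)) * (m+1)) / ((m+1) * D)"
      by (simp add: power2_eq_square mult_ac)
    have h: "(A * (pi * (m+1)) * (m+1)) / ((m+1) * D) = A * (pi * (m+1)) / D"
      using m1 by (subst mult.commute[of "m+1" D]) (rule mult_divide_mult_cancel_right, simp)
    show ?thesis unfolding f g h ..
  qed
  have e2: "1/2 * (A * (pi / (m + 2))) = A * (pi * (m + 3/2)) / D"
  proof -
    have f: "D = (m + 3/2) * (2 * (m+2))" unfolding D_def by (simp add: algebra_simps)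
    have p: "0 < m + 3/2" using m by simp
    have "A * (pi * (m + 3/2)) / D = (A * pi * (m + 3/2)) / ((m + 3/2) * (2 * (m+2)))"
      unfolding f by (simp add: mult_ac)
    also have "\<dots> = (A * pi) / (2 * (m+2))"
      using p by (subst mult.commute[of "m + 3/2"]) (rule mult_divide_mult_cancel_right, simp)
    also have "\<dots> = 1/2 * (A * (pi / (m + 2)))" by simp
    finally show ?thesis ..
  qed
  have "A * (pi * (m+1)) \<le> A * (pi * (m + 3/2))"
    using A by (intro mult_left_mono) auto
  then show ?thesis unfolding e1 e2 using Dp by (intro divide_right_mono) auto
qed

theorem lemmaB1:
  fixes f :: "complex \<Rightarrow> complex"
  assumes "f holomorphic_on ball 0 1"
    and "(\<integral>\<^sup>+ z \<in> ball 0 1. ennreal ((cmod (f z))\<^sup>2) \<partial>lborel) < \<infinity>"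
  shows "(\<integral>\<^sup>+ z \<in> ball 0 1. ennreal ((1 - cmod z)\<^sup>2 * (cmod (deriv f z))\<^sup>2) \<partial>lborel)
           \<le> ennreal (1/2) * (\<integral>\<^sup>+ z \<in> ball 0 1. ennreal ((cmod (f z))\<^sup>2) \<partial>lborel)"
proof -
  note hol = assms(1)
  define a where "a = (\<lambda>n. (deriv ^^ n) f 0 / fact n)"
  define bd where "bd = (\<lambda>n. (deriv ^^ n) (deriv f) 0 / fact n)"
  have hold: "deriv f holomorphic_on ball 0 1" by (rule holomorphic_deriv[OF hol open_ball])
  have fs: "(\<lambda>n. a n * z ^ n) sums f z" if "z \<in> ball 0 1" for z
    using holomorphic_power_series[OF hol that] by (simp add: a_def)
  have ds: "(\<lambda>n. bd n * z ^ n) sums deriv f z" if "z \<in> ball 0 1" for z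
    using holomorphic_power_series[OF hold that] by (simp add: bd_def)
  have bd_eq: "bd n = of_nat (Suc n) * a (Suc n)" for n
  proof -
    have e: "(deriv ^^ Suc n) f = (deriv ^^ n) (deriv f)" by (simp only: funpow_Suc_right o_def)
    define X where "X = (deriv ^^ n) (deriv f) 0"
    have k0: "(of_nat (Suc n) :: complex) \<noteq> 0" by (simp only: of_nat_eq_0_iff)
    have fs: "(fact (Suc n) :: complex) = of_nat (Suc n) * fact n" by (rule fact_Suc)
    have "of_nat (Suc n) * a (Suc n) = of_nat (Suc n) * (X / (of_nat (Suc n) * fact n))"
      unfolding a_def e X_def fs ..
    also have "\<dots> = X / fact n" using k0 by (simp del: of_nat_Suc)
    finally show ?thesis unfolding bd_def X_def by simp
  qed
  have fc: "continuous_on (ball 0 1) f" by (rule holomorphic_on_imp_continuous_on[OF hol])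
  have dc: "continuous_on (ball 0 1) (deriv f)" by (rule holomorphic_on_imp_continuous_on[OF hold])
  have RHS: "(\<integral>\<^sup>+ z \<in> ball 0 1. ennreal ((cmod (f z))\<^sup>2) \<partial>lborel)
      = (\<Sum>n. ennreal ((cmod (a n))\<^sup>2) * ennreal (pi / (real n + 1)))"
  proof -
    have "(\<integral>\<^sup>+ z. ennreal ((\<lambda>t. 1) (cmod z) * (cmod (f z))\<^sup>2) * indicator (ball 0 1) z \<partial>lborel)
       = (\<Sum>n. ennreal ((cmod (a n))\<^sup>2) * (\<integral>\<^sup>+ z. ennreal ((\<lambda>t. 1) (cmod z) * cmod z ^ (2*n)) * indicator (ball 0 1) z \<partial>lborel))"
      by (rule disc_identity[OF _ _ fs fc]) auto
    then show ?thesis by (simp add: I_value)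
  qed
  have LHS: "(\<integral>\<^sup>+ z \<in> ball 0 1. ennreal ((1 - cmod z)\<^sup>2 * (cmod (deriv f z))\<^sup>2) \<partial>lborel)
      = (\<Sum>n. ennreal ((cmod (bd n))\<^sup>2) * ennreal (Jr n))"
  proof -
    have w01: "0 \<le> (1 - t)\<^sup>2 \<and> (1 - t)\<^sup>2 \<le> 1" if "0 \<le> t" "t \<le> 1" for t :: real
      using that by (auto simp: power2_eq_square intro: mult_le_one)
    have "(\<integral>\<^sup>+ z. ennreal ((\<lambda>t. (1 - t)\<^sup>2) (cmod z) * (cmod (deriv f z))\<^sup>2) * indicator (ball 0 1) z \<partial>lborel)
       = (\<Sum>n. ennreal ((cmod (bd n))\<^sup>2) * (\<integral>\<^sup>+ z. ennreal ((\<lambda>t. (1 - t)\<^sup>2) (cmod z) * cmod z ^ (2*n)) * indicator (ball 0 1) z \<partial>lborel))"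
      by (rule disc_identity[OF _ _ ds dc]) (auto intro!: power_le_one)
    then show ?thesis by (simp add: J_value)
  qed
  define c where "c = (\<lambda>n. ennreal ((cmod (a n))\<^sup>2) * ennreal (pi / (real n + 1)))"
  have termle: "ennreal ((cmod (bd n))\<^sup>2) * ennreal (Jr n) \<le> ennreal (1/2) * c (Suc n)" for n
  proof -
    have J0: "0 \<le> Jr n" unfolding Jr_alt by simp
    have "(cmod (bd n))\<^sup>2 * Jr n = (real n + 1)\<^sup>2 * (cmod (a (Suc n)))\<^sup>2 * Jr n"
    proof -
      have nk: "cmod (1 + complex_of_nat n) = real n + 1"
        using norm_of_nat[of "Suc n", where 'a=complex] by simp
      show ?thesis by (simp add: bd_eq norm_mult power_mult_distrib nk)
    qed
    also have "\<dots> \<le> 1/2 * ((cmod (a (Suc n)))\<^sup>2 * (pi / (real (Suc n) + 1)))"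
    proof -
      have e: "real (Suc n) + 1 = real n + 2" by simp
      show ?thesis unfolding e Jr_alt by (rule coef_ineq) auto
    qed
    finally have le: "(cmod (bd n))\<^sup>2 * Jr n \<le> 1/2 * ((cmod (a (Suc n)))\<^sup>2 * (pi / (real (Suc n) + 1)))" .
    have "ennreal ((cmod (bd n))\<^sup>2) * ennreal (Jr n) = ennreal ((cmod (bd n))\<^sup>2 * Jr n)"
      using J0 by (simp add: ennreal_mult)
    also have "\<dots> \<le> ennreal (1/2 * ((cmod (a (Suc n)))\<^sup>2 * (pi / (real (Suc n) + 1))))"
      using le by (rule ennreal_leI)
    also have "\<dots> = ennreal (1/2) * c (Suc n)"
    proof -
      have h1: "ennreal (1/2 * ((cmod (a (Suc n)))\<^sup>2 * (pi / (real (Suc n) + 1))))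
          = ennreal (1/2) * ennreal ((cmod (a (Suc n)))\<^sup>2 * (pi / (real (Suc n) + 1)))"
        by (rule ennreal_mult) auto
      have h2: "ennreal ((cmod (a (Suc n)))\<^sup>2 * (pi / (real (Suc n) + 1)))
          = ennreal ((cmod (a (Suc n)))\<^sup>2) * ennreal (pi / (real (Suc n) + 1))"
        by (rule ennreal_mult) auto
      show ?thesis unfolding c_def h1 h2 ..
    qed
    finally show ?thesis .
  qed
  have "(\<Sum>n. ennreal ((cmod (bd n))\<^sup>2) * ennreal (Jr n)) \<le> (\<Sum>n. ennreal (1/2) * c (Suc n))"
    by (intro suminf_le termle summableI)
  also have "\<dots> = ennreal (1/2) * (\<Sum>n. c (Suc n))" by simp
  also have "(\<Sum>n. c (Suc n)) \<le> (\<Sum>n. c n)"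
  proof -
    have "(\<lambda>n. c (Suc n)) sums (\<Sum>n. c (Suc n))" by (rule summable_sums[OF summableI])
    then have "c sums ((\<Sum>n. c (Suc n)) + c 0)" by (rule sums_Suc)
    then have "(\<Sum>n. c n) = (\<Sum>n. c (Suc n)) + c 0" by (rule sums_unique[symmetric])
    then show ?thesis by simp
  qed
  then have "ennreal (1/2) * (\<Sum>n. c (Suc n)) \<le> ennreal (1/2) * (\<Sum>n. c n)"
    by (rule mult_left_mono) simp
  finally show ?thesis unfolding LHS RHS c_def .
qed


end
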